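(* Let $A$ be an $n\times n$ complex matrix, let $B=A-\frac{\operatorname{tr}A}{n}I$, and let $r$ be a positive integer. Then $$\operatorname{spd}(A)^{2r}\le 2^{2r-1}\operatorname{tr}\big(B^r(B^* )^r\big).$$
   Context: For $A$ with eigenvalues $\lambda_1,\dots,\lambda_n$ (counted with multiplicity), the spread is $\operatorname{spd}(A)=\max_{i,j}|\lambda_i-\lambda_j|$. $B^*$ is the conjugate transpose of $B$. *)

theory Defs
  imports "Jordan_Normal_Form.Schur_Decomposition"
begin

definition mtrace :: "'a::comm_ring_1 mat \<Rightarrow> 'a" where
  "mtrace A = (\<Sum>i<dim_row A. A $$ (i, i))"

text \<open>Spread of a square complex matrix: the maximal distance between two
eigenvalues (eigenvalues are the roots of the characteristic polynomial; the
maximum over the multiset equals the maximum over the set of eigenvalues).\<close>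
definition spd :: "complex mat \<Rightarrow> real" where
  "spd A = Max {cmod (x - y) | x y. eigenvalue A x \<and> eigenvalue A y}"

end

theory Submission
  imports Defs "HOL-Computational_Algebra.Fundamental_Theorem_Algebra"
begin


definition ip :: "nat \<Rightarrow> (nat \<Rightarrow> complex) \<Rightarrow> (nat \<Rightarrow> complex) \<Rightarrow> complex" where
  "ip n f g = (\<Sum>j<n. f j * cnj (g j))"

lemma mcnj: "z * cnj z = complex_of_real ((cmod z)^2)"
  by (metis complex_norm_square)

lemma ip_lin1: "ip n (\<lambda>j. f j - c * g j) h = ip n f h - c * ip n g h"
  unfolding ip_def by (simp add: algebra_simps sum_subtractf sum_distrib_left)

lemma ip_lin2: "ip n h (\<lambda>j. f j - c * g j) = ip n h f - cnj c * ip n h g"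
  unfolding ip_def by (simp add: algebra_simps sum_subtractf sum_distrib_left)

lemma ip_sym: "ip n g f = cnj (ip n f g)"
  unfolding ip_def by (simp add: mult.commute)

lemma ip_self: "ip n f f = of_real (\<Sum>j<n. (cmod (f j))^2)"
  unfolding ip_def by (simp add: mcnj)

lemma ip_self_Re: "Re (ip n f f) = (\<Sum>j<n. (cmod (f j))^2)"
  by (simp add: ip_self)

lemma ip_self_ge: "Re (ip n f f) \<ge> 0"
  by (simp add: ip_self_Re sum_nonneg)

lemma bessel2:
  assumes "ip n w1 w1 = 1" "ip n w2 w2 = 1" "ip n w1 w2 = 0"
  shows "(cmod (ip n a w1))^2 + (cmod (ip n a w2))^2 \<le> Re (ip n a a)"
proof -
  define c1 where "c1 = ip n a w1"
  define c2 where "c2 = ip n a w2"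
  define e1 where "e1 = (\<lambda>j. a j - c1 * w1 j)"
  define e where "e = (\<lambda>j. e1 j - c2 * w2 j)"
  have w21: "ip n w2 w1 = 0" using assms(3) ip_sym[of n w2 w1] by simp
  have "ip n e w1 = 0" unfolding e_def e1_def ip_lin1 using assms w21 c1_def by simp
  moreover have "ip n e w2 = 0" unfolding e_def e1_def ip_lin1 using assms c2_def by simp
  moreover have "ip n e a = ip n a a - c1 * cnj c1 - c2 * cnj c2"
    unfolding e_def e1_def ip_lin1 c1_def c2_def using ip_sym[of n w1 a] ip_sym[of n w2 a] by simp
  ultimately have "ip n e e = ip n a a - c1 * cnj c1 - c2 * cnj c2"
    unfolding e_def[of] e1_def  ip_lin2 by (simp add: e1_def[symmetric] e_def[symmetric])
  hence "Re (ip n e e) = Re (ip n a a) - (cmod c1)^2 - (cmod c2)^2"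
    by (simp add: mcnj)
  thus ?thesis using ip_self_ge[of n e] c1_def c2_def by simp
qed

lemma bessel1:
  assumes "ip n w1 w1 = 1"
  shows "(cmod (ip n a w1))^2 \<le> Re (ip n a a)"
proof -
  define c1 where "c1 = ip n a w1"
  define e where "e = (\<lambda>j. a j - c1 * w1 j)"
  have "ip n e w1 = 0" unfolding e_def ip_lin1 using assms c1_def by simp
  moreover have "ip n e a = ip n a a - c1 * cnj c1"
    unfolding e_def ip_lin1 c1_def using ip_sym[of n w1 a] by simp
  ultimately have "ip n e e = ip n a a - c1 * cnj c1"
    unfolding e_def[of] ip_lin2 by (simp add: e_def[symmetric])
  hence "Re (ip n e e) = Re (ip n a a) - (cmod c1)^2"
    by (simp add: mcnj)
  thus ?thesis using ip_self_ge[of n e] c1_def by simp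
qed

definition mv :: "nat \<Rightarrow> complex mat \<Rightarrow> (nat \<Rightarrow> complex) \<Rightarrow> (nat \<Rightarrow> complex)" where
  "mv n M f = (\<lambda>i. \<Sum>j<n. M $$ (i,j) * f j)"

lemma ip_cnj: "ip n (\<lambda>j. cnj (f j)) (\<lambda>j. cnj (g j)) = cnj (ip n f g)"
  unfolding ip_def by simp

lemma mv_ip: "mv n M u i = ip n (\<lambda>j. M $$ (i,j)) (\<lambda>j. cnj (u j))"
  unfolding mv_def ip_def by simp

lemma frob:
  assumes "ip n u1 u1 = 1" "ip n u2 u2 = 1" "ip n u1 u2 = 0"
  shows "(cmod (ip n (mv n M u1) u1))^2 + (cmod (ip n (mv n M u2) u2))^2
     \<le> (\<Sum>i<n. \<Sum>j<n. (cmod (M $$ (i,j)))^2)"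
proof -
  have a: "(cmod (ip n (mv n M u1) u1))^2 \<le> (\<Sum>i<n. (cmod (mv n M u1 i))^2)"
    using bessel1[OF assms(1), of "mv n M u1"] by (simp add: ip_self_Re)
  have b: "(cmod (ip n (mv n M u2) u2))^2 \<le> (\<Sum>i<n. (cmod (mv n M u2 i))^2)"
    using bessel1[OF assms(2), of "mv n M u2"] by (simp add: ip_self_Re)
  have c: "(cmod (mv n M u1 i))^2 + (cmod (mv n M u2 i))^2 \<le> (\<Sum>j<n. (cmod (M $$ (i,j)))^2)" for i
  proof -
    have w1: "ip n (\<lambda>j. cnj (u1 j)) (\<lambda>j. cnj (u1 j)) = 1" using assms by (simp add: ip_cnj)
    have w2: "ip n (\<lambda>j. cnj (u2 j)) (\<lambda>j. cnj (u2 j)) = 1" using assms by (simp add: ip_cnj)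
    have w12: "ip n (\<lambda>j. cnj (u1 j)) (\<lambda>j. cnj (u2 j)) = 0" using assms by (simp add: ip_cnj)
    show ?thesis using bessel2[OF w1 w2 w12, of "\<lambda>j. M $$ (i,j)"] unfolding mv_ip ip_self_Re .
  qed
  have "(\<Sum>i<n. (cmod (mv n M u1 i))^2) + (\<Sum>i<n. (cmod (mv n M u2 i))^2)
     \<le> (\<Sum>i<n. \<Sum>j<n. (cmod (M $$ (i,j)))^2)"
    unfolding sum.distrib[symmetric] by (rule sum_mono, rule c)
  with a b show ?thesis by linarith
qed

lemma ip_cong1: "(\<And>j. j < n \<Longrightarrow> f j = f' j) \<Longrightarrow> ip n f g = ip n f' g"
  unfolding ip_def by (rule sum.cong) auto

lemma ip_smult1: "ip n (\<lambda>j. a * f j) g = a * ip n f g"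
  unfolding ip_def by (simp add: sum_distrib_left algebra_simps)

lemma ip_smult2: "ip n f (\<lambda>j. a * g j) = cnj a * ip n f g"
  unfolding ip_def by (simp add: sum_distrib_left algebra_simps)

lemma mv_smult: "mv n M (\<lambda>j. a * f j) i = a * mv n M f i"
  unfolding mv_def by (simp add: sum_distrib_left algebra_simps)

lemma mv_diff: "mv n M (\<lambda>j. f j - a * g j) i = mv n M f i - a * mv n M g i"
  unfolding mv_def by (simp add: sum_distrib_left sum_subtractf algebra_simps)

lemma ip_zero:
  assumes "ip n f f = 0" "j < n" shows "f j = 0"
proof -
  have "(\<Sum>j<n. (cmod (f j))^2) = 0" using assms(1) ip_self_Re[of n f] by simp
  hence "(cmod (f j))^2 = 0" using assms(2) by (subst (asm) sum_nonneg_eq_0_iff) auto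
  thus ?thesis by simp
qed

lemma normalize:
  assumes "ip n f f \<noteq> 0"
  defines "s \<equiv> complex_of_real (1 / sqrt (Re (ip n f f)))"
  shows "ip n (\<lambda>j. s * f j) (\<lambda>j. s * f j) = 1" "cnj s = s"
    "s * s * ip n f f = 1"
proof -
  have r: "ip n f f = complex_of_real (Re (ip n f f))" using ip_self[of n f] by simp
  have pos: "Re (ip n f f) > 0" using assms(1) ip_self_ge[of n f] r by (metis less_eq_real_def of_real_0)
  show c: "cnj s = s" unfolding s_def by simp
  define R where "R = Re (ip n f f)"
  have "R / (sqrt R * sqrt R) = 1" using pos R_def by simp
  hence "complex_of_real (R / (sqrt R * sqrt R)) = 1" by simp
  hence "s * s * complex_of_real R = 1" unfolding s_def R_def[symmetric]
    by (metis (no_types, lifting) of_real_mult of_real_divide divide_divide_eq_left' mult.commute times_divide_eq_left mult_1 mult_1_right)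
  moreover have "ip n f f = complex_of_real R" using r R_def by simp
  ultimately show "s * s * ip n f f = 1" by simp
  thus "ip n (\<lambda>j. s * f j) (\<lambda>j. s * f j) = 1" by (simp add: ip_smult1 ip_smult2 c mult.assoc)
qed

lemma two_eig:
  assumes ev1: "\<And>i. i < n \<Longrightarrow> mv n M v i = p * v i"
    and ev2: "\<And>i. i < n \<Longrightarrow> mv n M w i = q * w i"
    and v0: "ip n v v \<noteq> 0"
    and indep: "\<And>c. \<exists>j<n. w j \<noteq> c * v j"
  shows "(cmod p)^2 + (cmod q)^2 \<le> (\<Sum>i<n. \<Sum>j<n. (cmod (M $$ (i,j)))^2)"
proof -
  define s1 where "s1 = complex_of_real (1 / sqrt (Re (ip n v v)))"
  note N1 = normalize[OF v0, folded s1_def]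
  define u1 where "u1 = (\<lambda>j. s1 * v j)"
  have u1: "ip n u1 u1 = 1" using N1 u1_def by simp
  define c where "c = ip n w u1"
  define w' where "w' = (\<lambda>j. w j - c * u1 j)"
  have wu: "ip n w' u1 = 0" unfolding w'_def ip_lin1 c_def u1 by simp
  have w0: "ip n w' w' \<noteq> 0"
  proof
    assume "ip n w' w' = 0"
    hence "w j = (c * s1) * v j" if "j < n" for j using ip_zero[OF _ that] unfolding w'_def u1_def
      by (metis eq_iff_diff_eq_0 mult.assoc)
    thus False using indep[of "c * s1"] by blast
  qed
  define s2 where "s2 = complex_of_real (1 / sqrt (Re (ip n w' w')))"
  note N2 = normalize[OF w0, folded s2_def]
  define u2 where "u2 = (\<lambda>j. s2 * w' j)"
  have u2: "ip n u2 u2 = 1" using N2 u2_def by simp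
  have u12: "ip n u1 u2 = 0"
    using wu ip_sym[of n u1 w'] unfolding u2_def ip_smult2 by simp
  have m1: "ip n (mv n M u1) u1 = p"
  proof -
    have "ip n (mv n M u1) u1 = ip n (\<lambda>j. p * u1 j) u1"
      by (rule ip_cong1) (simp add: u1_def mv_smult ev1)
    thus ?thesis by (simp add: ip_smult1 u1)
  qed
  have m2: "ip n (mv n M u2) u2 = q"
  proof -
    have "ip n (mv n M u2) u2 = ip n (\<lambda>j. s2 * (q * w' j - (c * (p - q)) * u1 j)) u2"
      by (rule ip_cong1) (simp add: u2_def w'_def mv_smult mv_diff ev2 u1_def ev1 algebra_simps)
    also have "\<dots> = s2 * (q * ip n w' u2 - (c * (p - q)) * ip n u1 u2)"
      by (simp add: ip_smult1 ip_lin1)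
    also have "\<dots> = s2 * (q * (s2 * ip n w' w'))"
      using wu ip_sym[of n u1 w'] N2(2) by (simp add: u2_def ip_smult2)
    also have "\<dots> = q" using N2(3) by (metis mult.assoc mult.left_commute mult_1_right)
    finally show ?thesis .
  qed
  show ?thesis using frob[OF u1 u2 u12, of M] m1 m2 by simp
qed



lemma adj_carrier: "M \<in> carrier_mat n m \<Longrightarrow> mat_adjoint M \<in> carrier_mat m n"
  unfolding mat_adjoint_def carrier_mat_def by simp

lemma adj_index: "M \<in> carrier_mat n m \<Longrightarrow> i < m \<Longrightarrow> j < n \<Longrightarrow>
   mat_adjoint M $$ (i,j) = cnj (M $$ (j,i))"
  unfolding mat_adjoint_def carrier_mat_def by (simp add: mat_of_rows_index)

lemma pow_carrier: "B \<in> carrier_mat n n \<Longrightarrow> B ^\<^sub>m k \<in> carrier_mat n n"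
  by (metis carrier_matI pow_mat_dim_square)

lemma adj_mult: assumes A: "(A :: complex mat) \<in> carrier_mat n m" and B: "B \<in> carrier_mat m k"
  shows "mat_adjoint (A * B) = mat_adjoint B * mat_adjoint A"
proof (rule eq_matI)
  have AB: "A * B \<in> carrier_mat n k" using A B by simp
  note c = adj_carrier[OF A] adj_carrier[OF B] adj_carrier[OF AB]
  show "dim_row (mat_adjoint (A * B)) = dim_row (mat_adjoint B * mat_adjoint A)"
    using c by simp
  show "dim_col (mat_adjoint (A * B)) = dim_col (mat_adjoint B * mat_adjoint A)"
    using c by simp
  fix i j assume i: "i < dim_row (mat_adjoint B * mat_adjoint A)" and j: "j < dim_col (mat_adjoint B * mat_adjoint A)"
  hence i: "i < k" and j: "j < n" using c by auto
  have "mat_adjoint (A * B) $$ (i,j) = cnj ((A * B) $$ (j,i))" using adj_index[OF AB i j] .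
  also have "\<dots> = cnj (\<Sum>l\<in>{0..<m}. A $$ (j,l) * B $$ (l,i))"
    using A B i j by (simp add: scalar_prod_def)
  also have "\<dots> = (\<Sum>l\<in>{0..<m}. mat_adjoint B $$ (i,l) * mat_adjoint A $$ (l,j))"
    by (simp add: adj_index[OF A] adj_index[OF B] i j mult.commute)
  also have "\<dots> = (mat_adjoint B * mat_adjoint A) $$ (i,j)"
    using c i j by (simp add: scalar_prod_def)
  finally show "mat_adjoint (A * B) $$ (i,j) = (mat_adjoint B * mat_adjoint A) $$ (i,j)" .
qed

lemma adj_one: "mat_adjoint (1\<^sub>m n :: complex mat) = 1\<^sub>m n"
proof -
  have c: "mat_adjoint (1\<^sub>m n :: complex mat) \<in> carrier_mat n n" by (rule adj_carrier) simp
  show ?thesis by (rule eq_matI) (use c in \<open>auto simp: adj_index[of _ n n]\<close>)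
qed

lemma pow_comm: assumes B: "B \<in> carrier_mat n n"
  shows "B ^\<^sub>m k * B = B * B ^\<^sub>m k"
proof (induct k)
  case 0 thus ?case using B by simp
next
  case (Suc k)
  have "B ^\<^sub>m Suc k * B = (B ^\<^sub>m k * B) * B" by simp
  also have "\<dots> = (B * B ^\<^sub>m k) * B" using Suc by simp
  also have "\<dots> = B * (B ^\<^sub>m k * B)" by (rule assoc_mult_mat[OF B pow_carrier[OF B] B])
  finally show ?case by simp
qed

lemma adj_pow: assumes B: "(B :: complex mat) \<in> carrier_mat n n"
  shows "mat_adjoint B ^\<^sub>m r = mat_adjoint (B ^\<^sub>m r)"
proof (induct r)
  case 0 thus ?case using B adj_one[of n] adj_carrier[OF B] by simp
next
  case (Suc r)
  have "mat_adjoint (B ^\<^sub>m Suc r) = mat_adjoint B * mat_adjoint (B ^\<^sub>m r)"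
    using adj_mult[OF pow_carrier[OF B] B] by simp
  also have "\<dots> = mat_adjoint B * mat_adjoint B ^\<^sub>m r" using Suc by simp
  also have "\<dots> = mat_adjoint B ^\<^sub>m r * mat_adjoint B" using pow_comm[OF adj_carrier[OF B]] by simp
  finally show ?case by simp
qed

lemma trace_adj: assumes M: "M \<in> carrier_mat n n"
  shows "Re (mtrace (M * mat_adjoint M)) = (\<Sum>i<n. \<Sum>j<n. (cmod (M $$ (i,j)))^2)"
proof -
  have "mtrace (M * mat_adjoint M) = (\<Sum>i<n. \<Sum>j<n. M $$ (i,j) * cnj (M $$ (i,j)))"
    unfolding mtrace_def using M adj_carrier[OF M]
    by (auto simp: scalar_prod_def adj_index[OF M] lessThan_atLeast0 intro!: sum.cong)
  also have "\<dots> = (\<Sum>i<n. \<Sum>j<n. complex_of_real ((cmod (M $$ (i,j)))^2))"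
    by (intro sum.cong refl) (rule complex_norm_square[symmetric])
  finally show ?thesis by simp
qed



lemma pm: fixes a b :: real assumes "a \<ge> 0" "b \<ge> 0" "m \<ge> 1"
  shows "(a + b)^m \<le> 2^(m-1) * (a^m + b^m)"
  using assms(3)
proof (induct m rule: dec_induct)
  case base thus ?case by simp
next
  case (step m)
  have key: "(a^m + b^m) * (a + b) \<le> 2 * (a^(Suc m) + b^(Suc m))"
  proof -
    have "0 \<le> (a^m - b^m) * (a - b)"
    proof (cases "a \<le> b")
      case True hence "a^m \<le> b^m" using assms power_mono by blast
      thus ?thesis using True by (simp add: mult_nonpos_nonpos)
    next
      case False hence "b^m \<le> a^m" using assms power_mono by (metis linear)
      thus ?thesis using False by simp
    qed
    thus ?thesis by (simp add: algebra_simps)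
  qed
  have "(a + b)^(Suc m) = (a+b)^m * (a + b)" by simp
  also have "\<dots> \<le> 2^(m-1) * (a^m + b^m) * (a + b)"
    using step assms by (intro mult_right_mono) auto
  also have "\<dots> \<le> 2^(m-1) * (2 * (a^(Suc m) + b^(Suc m)))"
    using key by (simp add: mult.assoc)
  also have "\<dots> = 2^(Suc m - 1) * (a^(Suc m) + b^(Suc m))"
    using step(1) by (cases m) auto
  finally show ?case .
qed

lemma smult_one_mult: assumes "v \<in> carrier_vec n"
  shows "((c::complex) \<cdot>\<^sub>m 1\<^sub>m n) *\<^sub>v v = c \<cdot>\<^sub>v v"
proof (intro eq_vecI)
  fix i assume i: "i < dim_vec (c \<cdot>\<^sub>v v)"
  hence i: "i < n" using assms by simp
  have "(\<Sum>ia = 0..<n. c * (if ia = i then 1 else 0) * v $ ia) = (\<Sum>ia = 0..<n. if ia = i then c * v $ ia else 0)"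
    by (rule sum.cong) auto
  also have "\<dots> = c * v $ i" using i by simp
  finally show "((c \<cdot>\<^sub>m 1\<^sub>m n) *\<^sub>v v) $ i = (c \<cdot>\<^sub>v v) $ i" using i assms by (simp add: scalar_prod_def)
qed (use assms in simp)


lemma mv_eig: assumes M: "M \<in> carrier_mat n n" and v: "v \<in> carrier_vec n"
  and ev: "M *\<^sub>v v = c \<cdot>\<^sub>v v" and i: "i < n"
  shows "mv n M (\<lambda>j. v $ j) i = c * v $ i"
proof -
  have "(M *\<^sub>v v) $ i = c * v $ i" using ev v i by simp
  moreover have "(M *\<^sub>v v) $ i = mv n M (\<lambda>j. v $ j) i"
    using M v i by (simp add: mv_def scalar_prod_def lessThan_atLeast0)
  ultimately show ?thesis by simp
qed

lemma mv_cong: "(\<And>j. j < n \<Longrightarrow> f j = g j) \<Longrightarrow> mv n M f i = mv n M g i"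
  unfolding mv_def by (rule sum.cong) auto

theorem theorem3p3:
  fixes A :: "complex mat" and n r :: nat
  assumes "A \<in> carrier_mat n n" and "n > 0" and "r > 0"
  defines "B \<equiv> A - (mtrace A / of_nat n) \<cdot>\<^sub>m 1\<^sub>m n"
  shows "spd A ^ (2 * r)
           \<le> 2 ^ (2 * r - 1) * Re (mtrace (B ^\<^sub>m r * (mat_adjoint B) ^\<^sub>m r))"
proof -
  note A = assms(1)
  define \<mu> where "\<mu> = mtrace A / of_nat n"
  have Bc: "B \<in> carrier_mat n n" unfolding B_def by (intro minus_carrier_mat smult_carrier_mat one_carrier_mat)
  define M where "M = B ^\<^sub>m r"
  have Mc: "M \<in> carrier_mat n n" unfolding M_def by (rule pow_carrier[OF Bc])
  define F where "F = (\<Sum>i<n. \<Sum>j<n. (cmod (M $$ (i,j)))^2)"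
  have RHS: "Re (mtrace (B ^\<^sub>m r * (mat_adjoint B) ^\<^sub>m r)) = F"
    unfolding F_def adj_pow[OF Bc] M_def[symmetric] using trace_adj[OF Mc] .
  have F0: "F \<ge> 0" unfolding F_def by (intro sum_nonneg) auto
  define E where "E = {x. eigenvalue A x}"
  have cp: "degree (char_poly A) = n \<and> coeff (char_poly A) n = 1" by (rule degree_monic_char_poly[OF A])
  hence cp0: "char_poly A \<noteq> 0" by auto
  have ES: "E = {x. poly (char_poly A) x = 0}" unfolding E_def using eigenvalue_root_char_poly[OF A] by auto
  have finE: "finite E" unfolding ES by (rule poly_roots_finite[OF cp0])
  have "\<not> constant (poly (char_poly A))" using cp assms(2) constant_degree[of "char_poly A"] by simp
  then obtain z where "poly (char_poly A) z = 0" using fundamental_theorem_of_algebra by blast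
  hence neE: "E \<noteq> {}" unfolding ES by auto
  have Seq: "{cmod (x - y) | x y. eigenvalue A x \<and> eigenvalue A y} = (\<lambda>(x,y). cmod (x - y)) ` (E \<times> E)"
    unfolding E_def by auto
  have "spd A \<in> {cmod (x - y) | x y. eigenvalue A x \<and> eigenvalue A y}"
    unfolding spd_def by (rule Max_in) (use finE neE in \<open>auto simp: Seq\<close>)
  then obtain x y where ex: "eigenvalue A x" and ey: "eigenvalue A y" and sp: "spd A = cmod (x - y)" by auto
  have shift: "eigenvector B v (t - \<mu>)" if "eigenvector A v t" for v t
  proof -
    have v: "v \<in> carrier_vec n" "v \<noteq> 0\<^sub>v n" "A *\<^sub>v v = t \<cdot>\<^sub>v v" using that A unfolding eigenvector_def by auto
    have "B *\<^sub>v v = A *\<^sub>v v - (\<mu> \<cdot>\<^sub>m 1\<^sub>m n) *\<^sub>v v" unfolding B_def \<mu>_def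
      by (rule minus_mult_distrib_mat_vec[OF A _ v(1)]) simp
    also have "\<dots> = t \<cdot>\<^sub>v v - \<mu> \<cdot>\<^sub>v v" using v by (simp add: smult_one_mult)
    also have "\<dots> = (t - \<mu>) \<cdot>\<^sub>v v" using v by (intro eq_vecI) (auto simp: algebra_simps)
    finally show ?thesis using v Bc unfolding eigenvector_def by auto
  qed
  show ?thesis
  proof (cases "x = y")
    case True
    hence "spd A = 0" using sp by simp
    moreover have "(0::real) ^ (2*r) = 0" using assms(3) by (intro zero_power) simp
    ultimately have "spd A ^ (2*r) = 0" by simp
    moreover have "0 \<le> (2::real) ^ (2 * r - 1) * F" using F0 by simp
    ultimately show ?thesis unfolding RHS by linarith
  next
    case False
    obtain v where v: "eigenvector A v x" using ex unfolding eigenvalue_def by auto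
    obtain w where w: "eigenvector A w y" using ey unfolding eigenvalue_def by auto
    define x' where "x' = x - \<mu>"
    define y' where "y' = y - \<mu>"
    have xy: "x' \<noteq> y'" using False x'_def y'_def by simp
    have bv: "eigenvector B v x'" using shift[OF v] x'_def by simp
    have bw: "eigenvector B w y'" using shift[OF w] y'_def by simp
    have vc: "v \<in> carrier_vec n" "v \<noteq> 0\<^sub>v n" "B *\<^sub>v v = x' \<cdot>\<^sub>v v" using bv Bc unfolding eigenvector_def by auto
    have wc: "w \<in> carrier_vec n" "w \<noteq> 0\<^sub>v n" "B *\<^sub>v w = y' \<cdot>\<^sub>v w" using bw Bc unfolding eigenvector_def by auto
    have Mv: "M *\<^sub>v v = x' ^ r \<cdot>\<^sub>v v" unfolding M_def by (rule eigenvector_pow[OF Bc bv])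
    have Mw: "M *\<^sub>v w = y' ^ r \<cdot>\<^sub>v w" unfolding M_def by (rule eigenvector_pow[OF Bc bw])
    obtain j0 where j0: "j0 < n" "v $ j0 \<noteq> 0" using vc(1,2) by (metis eq_vecI carrier_vecD index_zero_vec)
    have v0: "ip n (\<lambda>j. v $ j) (\<lambda>j. v $ j) \<noteq> 0" using ip_zero[of n "\<lambda>j. v $ j" j0] j0 by auto
    have indep: "\<exists>j<n. w $ j \<noteq> c * v $ j" for c
    proof (rule ccontr)
      assume "\<not> ?thesis"
      hence wv: "\<And>j. j < n \<Longrightarrow> w $ j = c * v $ j" by auto
      have "y' * w $ j0 = mv n B (\<lambda>j. w $ j) j0" using mv_eig[OF Bc wc(1) wc(3) j0(1)] by simp
      also have "\<dots> = mv n B (\<lambda>j. c * v $ j) j0" by (rule mv_cong) (simp add: wv)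
      also have "\<dots> = c * (x' * v $ j0)" unfolding mv_smult using mv_eig[OF Bc vc(1) vc(3) j0(1)] by simp
      finally have "y' * (c * v $ j0) = c * (x' * v $ j0)" using wv j0 by simp
      hence "c * (y' - x') * v $ j0 = 0" by (simp add: algebra_simps)
      hence c0: "c = 0" using xy j0 by simp
      have "w = 0\<^sub>v n" using wv c0 wc(1) by (intro eq_vecI) auto
      thus False using wc(2) by simp
    qed
    have te: "(cmod (x' ^ r))^2 + (cmod (y' ^ r))^2 \<le> F"
      unfolding F_def
      by (rule two_eig[of n M "\<lambda>j. v $ j" "x' ^ r" "\<lambda>j. w $ j" "y' ^ r"])
        (use mv_eig[OF Mc vc(1) Mv] mv_eig[OF Mc wc(1) Mw] v0 indep in auto)
    have "spd A = cmod (x' - y')" using sp x'_def y'_def by simp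
    also have "\<dots> \<le> cmod x' + cmod y'" by (rule norm_triangle_ineq4)
    finally have s1: "spd A \<le> cmod x' + cmod y'" .
    have spd0: "spd A \<ge> 0" using sp by simp
    have "spd A ^ (2*r) \<le> (cmod x' + cmod y') ^ (2*r)" using s1 spd0 by (rule power_mono)
    also have "\<dots> \<le> 2^(2*r-1) * (cmod x' ^ (2*r) + cmod y' ^ (2*r))"
      by (rule pm) (use assms(3) in auto)
    also have "cmod x' ^ (2*r) + cmod y' ^ (2*r) = (cmod (x' ^ r))^2 + (cmod (y' ^ r))^2"
      by (simp add: norm_power power_mult[symmetric] mult.commute)
    also have "2^(2*r-1) * \<dots> \<le> 2^(2*r-1) * F" using te by simp
    finally show ?thesis using RHS by simp
  qed
qed

end
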